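(* Let $\Gamma\preceq_\exists\Gamma'$ be ordered abelian groups (in the language $\{0,+,<\}$) and $\gamma\in\Gamma$. Then: (i) if $\Delta^+$ (resp. $\Delta'^+$) is the minimal convex subgroup of $\Gamma$ (resp. $\Gamma'$) containing $\gamma$, then $\Gamma/\Delta^+$ is pure in $\Gamma'/\Delta'^+$, i.e., the quotient $(\Gamma'/\Delta'^+)/(\Gamma/\Delta^+)$ is torsion-free; (ii) if $\Gamma$ is $\aleph_1$-saturated and $\Delta$ (resp. $\Delta'$) is the maximal convex subgroup of $\Gamma$ (resp. $\Gamma'$) not containing $\gamma$, then $\Gamma/\Delta\preceq_\exists\Gamma'/\Delta'$.
   Context: $\preceq_\exists$ means existentially closed substructure. A structure is $\aleph_1$-saturated if every countable decreasing chain of non-empty definable sets (with parameters) has non-empty intersection. *)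

theory Defs
  imports Main
begin

record 'a struc =
  sdom :: "'a set"
  szero :: 'a
  splus :: "'a \<Rightarrow> 'a \<Rightarrow> 'a"
  sless :: "'a \<Rightarrow> 'a \<Rightarrow> bool"

datatype trm = Var nat | Zero | Plus trm trm

datatype fm = Eq trm trm | Lt trm trm | Neg fm | Conj fm fm | Disj fm fm | Ex nat fm

fun evalt :: "'a struc \<Rightarrow> (nat \<Rightarrow> 'a) \<Rightarrow> trm \<Rightarrow> 'a" where
  "evalt M v (Var n) = v n"
| "evalt M v Zero = szero M"
| "evalt M v (Plus s t) = splus M (evalt M v s) (evalt M v t)"

fun sat :: "'a struc \<Rightarrow> (nat \<Rightarrow> 'a) \<Rightarrow> fm \<Rightarrow> bool" where
  "sat M v (Eq s t) = (evalt M v s = evalt M v t)"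
| "sat M v (Lt s t) = sless M (evalt M v s) (evalt M v t)"
| "sat M v (Neg f) = (\<not> sat M v f)"
| "sat M v (Conj f g) = (sat M v f \<and> sat M v g)"
| "sat M v (Disj f g) = (sat M v f \<or> sat M v g)"
| "sat M v (Ex n f) = (\<exists>a\<in>sdom M. sat M (v(n := a)) f)"

fun qfree :: "fm \<Rightarrow> bool" where
  "qfree (Ex n f) = False"
| "qfree (Neg f) = qfree f"
| "qfree (Conj f g) = (qfree f \<and> qfree g)"
| "qfree (Disj f g) = (qfree f \<and> qfree g)"
| "qfree _ = True"

fun existential :: "fm \<Rightarrow> bool" where
  "existential (Ex n f) = existential f"
| "existential f = qfree f"

text \<open>An embedding: maps the domain into the domain and preserves and reflects
  all quantifier-free formulas (i.e. an injective homomorphism preserving and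
  reflecting the order).\<close>
definition is_embedding :: "'a struc \<Rightarrow> 'b struc \<Rightarrow> ('a \<Rightarrow> 'b) \<Rightarrow> bool" where
  "is_embedding A B h \<longleftrightarrow> h ` sdom A \<subseteq> sdom B \<and>
     (\<forall>f v. qfree f \<longrightarrow> (\<forall>n. v n \<in> sdom A) \<longrightarrow> (sat B (h \<circ> v) f \<longleftrightarrow> sat A v f))"

definition ex_closed_emb :: "'a struc \<Rightarrow> 'b struc \<Rightarrow> ('a \<Rightarrow> 'b) \<Rightarrow> bool" where
  "ex_closed_emb A B h \<longleftrightarrow> is_embedding A B h \<and>
     (\<forall>f v. existential f \<longrightarrow> (\<forall>n. v n \<in> sdom A) \<longrightarrow> sat B (h \<circ> v) f \<longrightarrow> sat A v f)"

definition definable :: "'a struc \<Rightarrow> 'a set \<Rightarrow> bool" where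
  "definable M S \<longleftrightarrow> (\<exists>f v. (\<forall>n. v n \<in> sdom M) \<and>
       S = {a \<in> sdom M. sat M (v(0 := a)) f})"

definition aleph1_saturated :: "'a struc \<Rightarrow> bool" where
  "aleph1_saturated M \<longleftrightarrow> (\<forall>S :: nat \<Rightarrow> 'a set.
      (\<forall>n. definable M (S n) \<and> S n \<noteq> {}) \<longrightarrow> (\<forall>n. S (Suc n) \<subseteq> S n) \<longrightarrow>
      (\<Inter>n. S n) \<noteq> {})"

text \<open>The ambient group \<Gamma>' is a type of class linordered_ab_group_add;
  \<Gamma> is a subgroup G of it (a substructure that is again a group).\<close>
definition subgroup_of :: "'a::linordered_ab_group_add set \<Rightarrow> bool" where
  "subgroup_of G \<longleftrightarrow> 0 \<in> G \<and> (\<forall>x\<in>G. \<forall>y\<in>G. x + y \<in> G) \<and> (\<forall>x\<in>G. - x \<in> G)"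

definition sub_struc :: "'a::linordered_ab_group_add set \<Rightarrow> 'a struc" where
  "sub_struc G = \<lparr>sdom = G, szero = 0, splus = (+), sless = (<)\<rparr>"

definition convex_subgroup :: "'a::linordered_ab_group_add set \<Rightarrow> 'a set \<Rightarrow> bool" where
  "convex_subgroup G D \<longleftrightarrow> D \<subseteq> G \<and> subgroup_of D \<and>
     (\<forall>x\<in>D. \<forall>y\<in>D. \<forall>z\<in>G. x \<le> z \<and> z \<le> y \<longrightarrow> z \<in> D)"

definition min_convex_containing :: "'a::linordered_ab_group_add set \<Rightarrow> 'a \<Rightarrow> 'a set \<Rightarrow> bool" where
  "min_convex_containing G g D \<longleftrightarrow> convex_subgroup G D \<and> g \<in> D \<and>
     (\<forall>E. convex_subgroup G E \<and> g \<in> E \<longrightarrow> D \<subseteq> E)"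

definition max_convex_avoiding :: "'a::linordered_ab_group_add set \<Rightarrow> 'a \<Rightarrow> 'a set \<Rightarrow> bool" where
  "max_convex_avoiding G g D \<longleftrightarrow> convex_subgroup G D \<and> g \<notin> D \<and>
     (\<forall>E. convex_subgroup G E \<and> g \<notin> E \<longrightarrow> E \<subseteq> D)"

definition coset :: "'a::linordered_ab_group_add set \<Rightarrow> 'a \<Rightarrow> 'a set" where
  "coset D x = (\<lambda>d. x + d) ` D"

definition setplus :: "'a::linordered_ab_group_add set \<Rightarrow> 'a set \<Rightarrow> 'a set" where
  "setplus X Y = {x + y | x y. x \<in> X \<and> y \<in> Y}"

definition quot_struc :: "'a::linordered_ab_group_add set \<Rightarrow> 'a set \<Rightarrow> 'a set struc" where
  "quot_struc G D = \<lparr>sdom = coset D ` G, szero = D, splus = setplus,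
      sless = (\<lambda>X Y. X \<noteq> Y \<and> (\<exists>x\<in>X. \<exists>y\<in>Y. x < y))\<rparr>"

end

theory Submission
  imports Defs
begin


fun nmul :: "nat \<Rightarrow> 'a::linordered_ab_group_add \<Rightarrow> 'a" where
  "nmul 0 x = 0"
| "nmul (Suc n) x = x + nmul n x"

definition ab :: "'a::linordered_ab_group_add \<Rightarrow> 'a" where
  "ab x = (if 0 \<le> x then x else - x)"

lemma ab_pos[simp]: "0 \<le> x \<Longrightarrow> ab x = x" by (simp add: ab_def)
lemma ab_negv: "x \<le> 0 \<Longrightarrow> ab x = - x" by (auto simp: ab_def)
lemma ab_nonneg[simp]: "0 \<le> ab x" by (auto simp: ab_def)
lemma neg_ge: "\<not> 0 \<le> x \<Longrightarrow> x \<le> - (x::'a::linordered_ab_group_add)"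
  by (metis linorder_le_cases neg_le_0_iff_le order_trans)
lemma ab_le_iff: "ab x \<le> c \<longleftrightarrow> x \<le> c \<and> - x \<le> c"
  using neg_ge[of x] by (cases "0 \<le> x") (auto simp: ab_def intro: order_trans[of _ 0] order_trans[of _ "-x"])
lemma ab_less_iff: "ab x < c \<longleftrightarrow> x < c \<and> - x < c"
  using neg_ge[of x] by (cases "0 \<le> x") (auto simp: ab_def intro: le_less_trans[of _ 0] le_less_trans[of _ "-x"])
lemma ab_uminus[simp]: "ab (- x) = ab x" by (auto simp: ab_def)
lemma ab_ge: "x \<le> ab x" "- x \<le> ab x" by (auto simp: ab_def)
lemma ab_triangle: "ab (x + y) \<le> ab x + ab y"
  unfolding ab_le_iff using ab_ge[of x] ab_ge[of y] add_mono[of "-x" "ab x" "-y" "ab y"]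
  by (auto intro: add_mono simp: algebra_simps)
lemma ab_zero[simp]: "ab x = 0 \<longleftrightarrow> x = 0" by (auto simp: ab_def)
lemma ab_gt0: "x \<noteq> 0 \<Longrightarrow> 0 < ab x" using ab_nonneg[of x] ab_zero[of x] by (simp add: order_le_less)

lemma nmul_zero[simp]: "nmul n 0 = 0" by (induct n) simp_all

lemma nmul_add: "nmul n (x + y) = nmul n x + nmul n y"
  by (induct n) (simp_all add: algebra_simps)

lemma nmul_neg: "nmul n (- x) = - nmul n x"
  by (induct n) (simp_all add: algebra_simps)

lemma nmul_diff: "nmul n (x - y) = nmul n x - nmul n y"
  using nmul_add[of n x "- y"] nmul_neg[of n y] by simp

lemma nmul_nonneg: "0 \<le> x \<Longrightarrow> 0 \<le> nmul n x"
  by (induct n) simp_all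

lemma nmul_mono: "x \<le> y \<Longrightarrow> nmul n x \<le> nmul n y"
  by (induct n) (simp_all add: add_mono)

lemma nmul_plus_n: "nmul (m + n) x = nmul m x + nmul n x"
  by (induct m) (simp_all add: algebra_simps)

lemma nmul_mono_n: "0 \<le> x \<Longrightarrow> m \<le> n \<Longrightarrow> nmul m x \<le> nmul n x"
proof -
  assume a: "0 \<le> x" "m \<le> n"
  then obtain k where "n = m + k" using le_Suc_ex by blast
  then show ?thesis using nmul_plus_n[of m k x] nmul_nonneg[OF a(1), of k] by simp
qed

lemma nmul_abs: "(ab (nmul n x)) = nmul n (ab x)"
proof (cases "0 \<le> x")
  case True
  then show ?thesis using nmul_nonneg[OF True, of n] by simp
next
  case False
  then have "nmul n x \<le> 0" using nmul_mono[of x 0 n] by (simp add: not_le order_less_imp_le)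
  then show ?thesis using False nmul_neg[of n x] ab_negv[of "nmul n x"] ab_negv[of x]
    by (simp add: not_le order_less_imp_le)
qed

lemma nmul_ge: "0 < n \<Longrightarrow> 0 \<le> x \<Longrightarrow> x \<le> nmul n x"
  using nmul_mono_n[of x 1 n] by simp

lemma nmul_sum: "(\<Sum>i<n. x) = nmul n x"
  by (induct n) (simp_all add: add.commute)

lemma nmul_in: "subgroup_of H \<Longrightarrow> x \<in> H \<Longrightarrow> nmul n x \<in> H"
  by (induct n) (auto simp: subgroup_of_def)

lemma abs_in: "subgroup_of H \<Longrightarrow> x \<in> H \<Longrightarrow> (ab x) \<in> H"
  by (auto simp: subgroup_of_def ab_def)

lemma diff_in: "subgroup_of H \<Longrightarrow> x \<in> H \<Longrightarrow> y \<in> H \<Longrightarrow> x - y \<in> H"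
  unfolding subgroup_of_def by (metis diff_conv_add_uminus)

lemma subgroup_UNIV: "subgroup_of UNIV"
  by (simp add: subgroup_of_def)

definition arch :: "'a::linordered_ab_group_add set \<Rightarrow> 'a \<Rightarrow> 'a set" where
  "arch H c = {x \<in> H. \<forall>n. nmul n (ab x) < c}"

lemma arch_subgroup:
  assumes H: "subgroup_of H" and c: "0 < c"
  shows "subgroup_of (arch H c)"
  unfolding subgroup_of_def
proof (intro conjI ballI)
  show "0 \<in> arch H c" using H c by (simp add: arch_def subgroup_of_def)
next
  fix x y assume x: "x \<in> arch H c" and y: "y \<in> arch H c"
  show "x + y \<in> arch H c"
    unfolding arch_def
  proof (intro CollectI conjI allI)
    show "x + y \<in> H" using x y H by (simp add: arch_def subgroup_of_def)
    fix n
    define m where "m = max (ab x) (ab y)"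
    have "nmul n (ab (x + y)) \<le> nmul n (m + m)"
      by (rule nmul_mono) (rule order_trans[OF ab_triangle], rule add_mono, auto simp: m_def)
    also have "\<dots> = nmul (n + n) m" by (simp add: nmul_add nmul_plus_n)
    also have "\<dots> < c" using x y by (auto simp: arch_def m_def max_def)
    finally show "nmul n (ab (x + y)) < c" .
  qed
next
  fix x assume "x \<in> arch H c"
  then show "- x \<in> arch H c" using H by (simp add: arch_def subgroup_of_def)
qed

lemma arch_convex:
  assumes "d \<in> arch H c" "x \<in> H" "(ab x) \<le> (ab d)"
  shows "x \<in> arch H c"
proof -
  have "nmul n (ab x) < c" for n
  proof -
    have "nmul n (ab d) < c" using assms(1) unfolding arch_def by blast
    then show ?thesis using nmul_mono[OF assms(3), of n] by (rule le_less_trans[rotated])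
  qed
  then show ?thesis using assms(2) by (simp add: arch_def)
qed

lemma max_avoid_eq:
  assumes H: "subgroup_of H" and g: "\<gamma> \<in> H" and m: "max_convex_avoiding H \<gamma> E"
  shows "E = arch H (ab \<gamma>)" and "\<gamma> \<noteq> 0"
proof -
  have cs: "convex_subgroup H E" and gE: "\<gamma> \<notin> E"
    and mx: "\<And>F. convex_subgroup H F \<Longrightarrow> \<gamma> \<notin> F \<Longrightarrow> F \<subseteq> E"
    using m by (auto simp: max_convex_avoiding_def)
  have EH: "E \<subseteq> H" and sE: "subgroup_of E"
    and cv: "\<And>x y z. x \<in> E \<Longrightarrow> y \<in> E \<Longrightarrow> z \<in> H \<Longrightarrow> x \<le> z \<Longrightarrow> z \<le> y \<Longrightarrow> z \<in> E"
    using cs unfolding convex_subgroup_def by blast+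
  have z: "0 \<in> E" using sE by (simp add: subgroup_of_def)
  then show g0: "\<gamma> \<noteq> 0" using gE by auto
  then have cpos: "0 < (ab \<gamma>)" by (rule ab_gt0)
  show "E = arch H (ab \<gamma>)"
  proof
    show "E \<subseteq> arch H (ab \<gamma>)"
    proof
      fix x assume x: "x \<in> E"
      have xH: "x \<in> H" using x EH by auto
      have "nmul n (ab x) < (ab \<gamma>)" for n
      proof (rule ccontr)
        assume "\<not> nmul n (ab x) < (ab \<gamma>)"
        then have le: "(ab \<gamma>) \<le> nmul n (ab x)" by simp
        have "nmul n (ab x) \<in> E" using nmul_in[OF sE abs_in[OF sE x]] .
        then have "(ab \<gamma>) \<in> E" using cv[OF z _ abs_in[OF H g] _ le] by simp
        then have "\<gamma> \<in> E" 
        proof (cases "0 \<le> \<gamma>")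
          case True then show ?thesis using \<open>ab \<gamma> \<in> E\<close> by simp
        next
          case False
          then have "ab \<gamma> = - \<gamma>" by (simp add: ab_def)
          then have "- (- \<gamma>) \<in> E" using \<open>ab \<gamma> \<in> E\<close> sE unfolding subgroup_of_def by metis
          then show ?thesis by simp
        qed
        then show False using gE by simp
      qed
      then show "x \<in> arch H (ab \<gamma>)" using xH by (simp add: arch_def)
    qed
  next
    have "convex_subgroup H (arch H (ab \<gamma>))"
      unfolding convex_subgroup_def
    proof (intro conjI ballI impI allI)
      show "arch H (ab \<gamma>) \<subseteq> H" by (auto simp: arch_def)
      show "subgroup_of (arch H (ab \<gamma>))" by (rule arch_subgroup[OF H cpos])
      fix x y z assume x: "x \<in> arch H (ab \<gamma>)" and y: "y \<in> arch H (ab \<gamma>)" and zH: "z \<in> H"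
        and xz: "x \<le> z \<and> z \<le> y"
      show "z \<in> arch H (ab \<gamma>)"
      proof (cases "0 \<le> z")
        case True
        then show ?thesis using arch_convex[OF y zH] xz by auto
      next
        case False
        then have "ab z = - z" by (simp add: ab_def)
        also have "\<dots> \<le> - x" using xz by simp
        also have "\<dots> \<le> ab x" by (rule ab_ge)
        finally show ?thesis using arch_convex[OF x zH] by simp
      qed
    qed
    moreover have "\<gamma> \<notin> arch H (ab \<gamma>)"
      by (auto simp: arch_def intro: exI[of _ 1])
    ultimately show "arch H (ab \<gamma>) \<subseteq> E" using mx by blast
  qed
qed

definition fin :: "'a::linordered_ab_group_add set \<Rightarrow> 'a \<Rightarrow> 'a set" where
  "fin H c = {x \<in> H. \<exists>n. (ab x) \<le> nmul n c}"

lemma min_contain_eq: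
  assumes H: "subgroup_of H" and g: "\<gamma> \<in> H" and m: "min_convex_containing H \<gamma> E"
  shows "E = fin H (ab \<gamma>)"
proof -
  have cs: "convex_subgroup H E" and gE: "\<gamma> \<in> E"
    and mn: "\<And>F. convex_subgroup H F \<Longrightarrow> \<gamma> \<in> F \<Longrightarrow> E \<subseteq> F"
    using m by (auto simp: min_convex_containing_def)
  have EH: "E \<subseteq> H" and sE: "subgroup_of E"
    and cv: "\<And>x y z. x \<in> E \<Longrightarrow> y \<in> E \<Longrightarrow> z \<in> H \<Longrightarrow> x \<le> z \<Longrightarrow> z \<le> y \<Longrightarrow> z \<in> E"
    using cs unfolding convex_subgroup_def by blast+
  show ?thesis
  proof
    show "fin H (ab \<gamma>) \<subseteq> E"
    proof
      fix x assume "x \<in> fin H (ab \<gamma>)"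
      then obtain n where xH: "x \<in> H" and le: "(ab x) \<le> nmul n (ab \<gamma>)" by (auto simp: fin_def)
      have a: "nmul n (ab \<gamma>) \<in> E" by (rule nmul_in[OF sE abs_in[OF sE gE]])
      then have b: "- nmul n (ab \<gamma>) \<in> E" using sE by (simp add: subgroup_of_def)
      have "- nmul n (ab \<gamma>) \<le> x" "x \<le> nmul n (ab \<gamma>)" using le unfolding ab_le_iff
        by (simp_all add: minus_le_iff)
      then show "x \<in> E" using cv[OF b a xH] by blast
    qed
  next
    have "convex_subgroup H (fin H (ab \<gamma>))"
      unfolding convex_subgroup_def subgroup_of_def
    proof (intro conjI ballI impI allI)
      show "fin H (ab \<gamma>) \<subseteq> H" by (auto simp: fin_def)
      show "0 \<in> fin H (ab \<gamma>)" using H by (auto simp: fin_def subgroup_of_def intro: exI[of _ 0])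
    next
      fix x y assume x: "x \<in> fin H (ab \<gamma>)" and y: "y \<in> fin H (ab \<gamma>)"
      then obtain a b where "(ab x) \<le> nmul a (ab \<gamma>)" "(ab y) \<le> nmul b (ab \<gamma>)" "x \<in> H" "y \<in> H"
        by (auto simp: fin_def)
      moreover have "(ab (x + y)) \<le> nmul (a + b) (ab \<gamma>)"
        unfolding nmul_plus_n by (rule order_trans[OF ab_triangle], rule add_mono) fact+
      moreover have "x + y \<in> H" using H \<open>x \<in> H\<close> \<open>y \<in> H\<close> by (simp add: subgroup_of_def)
      ultimately show "x + y \<in> fin H (ab \<gamma>)" by (auto simp: fin_def)
    next
      fix x assume "x \<in> fin H (ab \<gamma>)"
      then show "- x \<in> fin H (ab \<gamma>)" using H by (auto simp: fin_def subgroup_of_def)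
    next
      fix x y z assume x: "x \<in> fin H (ab \<gamma>)" and y: "y \<in> fin H (ab \<gamma>)" and zH: "z \<in> H"
        and xz: "x \<le> z \<and> z \<le> y"
      then obtain a b where ax: "(ab x) \<le> nmul a (ab \<gamma>)" and bx: "(ab y) \<le> nmul b (ab \<gamma>)"
        by (auto simp: fin_def)
      define A where "A = nmul a (ab \<gamma>)"
      define B where "B = nmul b (ab \<gamma>)"
      have A0: "0 \<le> A" and B0: "0 \<le> B" unfolding A_def B_def by (simp_all add: nmul_nonneg)
      have "z \<le> A + B"
      proof -
        have "z \<le> y" using xz by simp
        also have "\<dots> \<le> ab y" by (rule ab_ge)
        also have "\<dots> \<le> B" using bx by (simp add: B_def)
        also have "\<dots> \<le> A + B" using A0 by simp
        finally show ?thesis .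
      qed
      moreover have "- z \<le> A + B"
      proof -
        have "- z \<le> - x" using xz by simp
        also have "\<dots> \<le> ab x" by (rule ab_ge)
        also have "\<dots> \<le> A" using ax by (simp add: A_def)
        also have "\<dots> \<le> A + B" using B0 by simp
        finally show ?thesis .
      qed
      ultimately have "(ab z) \<le> nmul (a + b) (ab \<gamma>)"
        unfolding nmul_plus_n ab_le_iff A_def B_def by simp
      then show "z \<in> fin H (ab \<gamma>)" using zH by (auto simp: fin_def)
    qed
    moreover have "\<gamma> \<in> fin H (ab \<gamma>)" using g by (auto simp: fin_def intro: exI[of _ 1])
    ultimately show "E \<subseteq> fin H (ab \<gamma>)" using mn by blast
  qed
qed



primrec ev :: "(nat \<Rightarrow> 'a::linordered_ab_group_add) \<Rightarrow> trm \<Rightarrow> 'a" where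
  "ev r (Var n) = r n"
| "ev r Zero = 0"
| "ev r (Plus s t) = ev r s + ev r t"

lemma sub_struc_simps[simp]:
  "sdom (sub_struc H) = H" "szero (sub_struc H) = 0" "splus (sub_struc H) = (+)"
  "sless (sub_struc H) = (<)"
  by (simp_all add: sub_struc_def)

lemma evalt_sub[simp]: "evalt (sub_struc H) r t = ev r t"
  by (induct t) simp_all

lemma quot_simps[simp]:
  "sdom (quot_struc H E) = coset E ` H" "szero (quot_struc H E) = E"
  "splus (quot_struc H E) = setplus"
  "sless (quot_struc H E) = (\<lambda>X Y. X \<noteq> Y \<and> (\<exists>x\<in>X. \<exists>y\<in>Y. x < y))"
  by (simp_all add: quot_struc_def)

fun ntm :: "nat \<Rightarrow> trm \<Rightarrow> trm" where
  "ntm 0 t = Zero"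
| "ntm (Suc n) t = Plus t (ntm n t)"

lemma ev_ntm[simp]: "ev r (ntm n t) = nmul n (ev r t)"
  by (induct n) simp_all

lemma ev_in: "subgroup_of H \<Longrightarrow> \<forall>k. r k \<in> H \<Longrightarrow> ev r t \<in> H"
  by (induct t) (auto simp: subgroup_of_def)

definition cnd :: "nat \<Rightarrow> nat \<Rightarrow> trm \<Rightarrow> trm \<Rightarrow> fm" where
  "cnd cv N s t = Conj (Lt (ntm N s) (Plus (ntm N t) (Var cv)))
                       (Lt (ntm N t) (Plus (ntm N s) (Var cv)))"

lemma sat_cnd: "sat (sub_struc H) r (cnd cv N s t) \<longleftrightarrow> nmul N (ab (ev r s - ev r t)) < r cv"
proof -
  have "nmul N (ab (ev r s - ev r t)) = ab (nmul N (ev r s) - nmul N (ev r t))"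
    by (simp add: nmul_abs[symmetric] nmul_diff)
  then show ?thesis
    by (simp add: cnd_def ab_less_iff algebra_simps)
qed

lemma cnd_mono: "N \<le> N' \<Longrightarrow> sat (sub_struc H) r (cnd cv N' s t) \<Longrightarrow> sat (sub_struc H) r (cnd cv N s t)"
  unfolding sat_cnd using nmul_mono_n[OF ab_nonneg] by (blast intro: le_less_trans)

primrec tr :: "nat \<Rightarrow> nat \<Rightarrow> nat \<Rightarrow> bool \<Rightarrow> fm \<Rightarrow> fm" where
  "tr cv N M p (Eq s t) = (if p then cnd cv N s t else Neg (cnd cv M s t))"
| "tr cv N M p (Lt s t) = (if p then Conj (Neg (cnd cv M s t)) (Lt s t)
                           else Disj (cnd cv N s t) (Neg (Lt s t)))"
| "tr cv N M p (Neg f) = tr cv N M (\<not> p) f"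
| "tr cv N M p (Conj f g) = (if p then Conj (tr cv N M p f) (tr cv N M p g)
                             else Disj (tr cv N M p f) (tr cv N M p g))"
| "tr cv N M p (Disj f g) = (if p then Disj (tr cv N M p f) (tr cv N M p g)
                             else Conj (tr cv N M p f) (tr cv N M p g))"
| "tr cv N M p (Ex n f) = Eq Zero Zero"

lemma qfree_tr: "qfree (tr cv N M p f)"
  by (induct f arbitrary: p) (simp_all add: cnd_def)

lemma tr_mono: "N \<le> N' \<Longrightarrow> sat (sub_struc H) r (tr cv N' M p f) \<Longrightarrow> sat (sub_struc H) r (tr cv N M p f)"
proof (induct f arbitrary: p)
  case (Eq s t) then show ?case by (auto dest: cnd_mono[of N N'] split: if_splits)
next
  case (Lt s t) then show ?case by (auto dest: cnd_mono[of N N'] split: if_splits)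
qed (auto split: if_splits)

fun approx :: "nat \<Rightarrow> nat \<Rightarrow> nat \<Rightarrow> fm \<Rightarrow> fm" where
  "approx cv N M (Ex n g) = Ex n (approx cv N M g)"
| "approx cv N M f = tr cv N M True f"

lemma existential_tr: "existential (tr cv N M p f)"
  by (induct f arbitrary: p) (simp_all add: cnd_def qfree_tr)

lemma existential_approx: "existential f \<Longrightarrow> existential (approx cv N M f)"
proof (induct f)
  case (Ex n f) then show ?case by simp
qed (simp_all add: existential_tr del: tr.simps)

lemma approx_mono: "N \<le> N' \<Longrightarrow> sat (sub_struc H) r (approx cv N' M f) \<Longrightarrow> sat (sub_struc H) r (approx cv N M f)"
proof (induct f arbitrary: r)
  case (Ex n f) then show ?case by auto
qed (auto intro: tr_mono[of N N', simplified] simp del: tr.simps)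

primrec maxt :: "trm \<Rightarrow> nat" where
  "maxt (Var n) = n" | "maxt Zero = 0" | "maxt (Plus s t) = max (maxt s) (maxt t)"

primrec maxv :: "fm \<Rightarrow> nat" where
  "maxv (Eq s t) = max (maxt s) (maxt t)"
| "maxv (Lt s t) = max (maxt s) (maxt t)"
| "maxv (Neg f) = maxv f"
| "maxv (Conj f g) = max (maxv f) (maxv g)"
| "maxv (Disj f g) = max (maxv f) (maxv g)"
| "maxv (Ex n f) = max n (maxv f)"

lemma evalt_coinc: "(\<forall>k\<le>maxt t. v k = w k) \<Longrightarrow> evalt M v t = evalt M w t"
  by (induct t) auto

lemma sat_coinc: "(\<forall>k\<le>maxv f. v k = w k) \<Longrightarrow> sat M v f = sat M w f"
proof (induct f arbitrary: v w)
  case (Eq s t) then show ?case using evalt_coinc[of s v w M] evalt_coinc[of t v w M] by simp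
next
  case (Lt s t) then show ?case using evalt_coinc[of s v w M] evalt_coinc[of t v w M] by simp
next
  case (Ex n f)
  have "sat M (v(n := a)) f = sat M (w(n := a)) f" for a
  proof (rule Ex.hyps)
    show "\<forall>k\<le>maxv f. (v(n := a)) k = (w(n := a)) k" using Ex.prems by simp
  qed
  then show ?case by simp
next
  case (Conj f g)
  have "sat M v f = sat M w f" by (rule Conj.hyps(1)) (use Conj.prems in simp)
  moreover have "sat M v g = sat M w g" by (rule Conj.hyps(2)) (use Conj.prems in simp)
  ultimately show ?case by simp
next
  case (Disj f g)
  have "sat M v f = sat M w f" by (rule Disj.hyps(1)) (use Disj.prems in simp)
  moreover have "sat M v g = sat M w g" by (rule Disj.hyps(2)) (use Disj.prems in simp)
  ultimately show ?case by simp
qed simp_all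

primrec rent :: "(nat \<Rightarrow> nat) \<Rightarrow> trm \<Rightarrow> trm" where
  "rent p (Var n) = Var (p n)" | "rent p Zero = Zero" | "rent p (Plus s t) = Plus (rent p s) (rent p t)"

primrec ren :: "(nat \<Rightarrow> nat) \<Rightarrow> fm \<Rightarrow> fm" where
  "ren p (Eq s t) = Eq (rent p s) (rent p t)"
| "ren p (Lt s t) = Lt (rent p s) (rent p t)"
| "ren p (Neg f) = Neg (ren p f)"
| "ren p (Conj f g) = Conj (ren p f) (ren p g)"
| "ren p (Disj f g) = Disj (ren p f) (ren p g)"
| "ren p (Ex n f) = Ex (p n) (ren p f)"

lemma evalt_ren: "evalt M v (rent p t) = evalt M (v \<circ> p) t"
  by (induct t) simp_all

lemma sat_ren: "inj p \<Longrightarrow> sat M v (ren p f) = sat M (v \<circ> p) f"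
proof (induct f arbitrary: v)
  case (Ex n f)
  have eq: "(v(p n := a)) \<circ> p = (v \<circ> p)(n := a)" for a
    using Ex.prems by (auto simp: inj_def)
  have "sat M (v(p n := a)) (ren p f) = sat M ((v \<circ> p)(n := a)) f" for a
  proof -
    have "sat M (v(p n := a)) (ren p f) = sat M (v(p n := a) \<circ> p) f" by (rule Ex.hyps[OF Ex.prems])
    also have "\<dots> = sat M ((v \<circ> p)(n := a)) f" by (simp only: eq)
    finally show ?thesis .
  qed
  then show ?case by (simp only: ren.simps sat.simps)
qed (simp_all add: evalt_ren)

definition sw :: "nat \<Rightarrow> nat \<Rightarrow> nat" where
  "sw n k = (if k = 0 then n else if k = n then 0 else k)"

lemma sw_inj: "inj (sw n)"
  by (auto simp: inj_def sw_def split: if_splits)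

lemma definable_upd:
  assumes "\<forall>k. r k \<in> sdom M"
  shows "definable M {a \<in> sdom M. sat M (r(n := a)) \<phi>}"
proof -
  have e: "((r \<circ> sw n)(0 := a)) \<circ> sw n = r(n := a)" for a
    by (auto simp: sw_def)
  show ?thesis unfolding definable_def
    apply (rule exI[of _ "ren (sw n) \<phi>"], rule exI[of _ "r \<circ> sw n"])
    using assms by (simp add: sat_ren[OF sw_inj] e)
qed



lemma coset_eq:
  assumes E: "subgroup_of E"
  shows "coset E a = coset E b \<longleftrightarrow> a - b \<in> E"
proof
  assume "coset E a = coset E b"
  moreover have "a \<in> coset E a" using E unfolding coset_def subgroup_of_def by force
  ultimately obtain d where "d \<in> E" "a = b + d" unfolding coset_def by auto
  then show "a - b \<in> E" by (simp add: algebra_simps)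
next
  assume ab: "a - b \<in> E"
  then have ba: "b - a \<in> E" using E unfolding subgroup_of_def by (metis minus_diff_eq)
  show "coset E a = coset E b"
  proof
    show "coset E a \<subseteq> coset E b"
    proof
      fix x assume "x \<in> coset E a"
      then obtain d where d: "d \<in> E" "x = a + d" unfolding coset_def by auto
      then have "(a - b) + d \<in> E" using ab E unfolding subgroup_of_def by blast
      moreover have "x = b + ((a - b) + d)" using d by (simp add: algebra_simps)
      ultimately show "x \<in> coset E b" unfolding coset_def by blast
    qed
  next
    show "coset E b \<subseteq> coset E a"
    proof
      fix x assume "x \<in> coset E b"
      then obtain d where d: "d \<in> E" "x = b + d" unfolding coset_def by auto
      then have "(b - a) + d \<in> E" using ba E unfolding subgroup_of_def by blast
      moreover have "x = a + ((b - a) + d)" using d by (simp add: algebra_simps)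
      ultimately show "x \<in> coset E a" unfolding coset_def by blast
    qed
  qed
qed

lemma setplus_coset:
  assumes E: "subgroup_of E"
  shows "setplus (coset E a) (coset E b) = coset E (a + b)"
proof
  show "setplus (coset E a) (coset E b) \<subseteq> coset E (a + b)"
  proof
    fix x assume "x \<in> setplus (coset E a) (coset E b)"
    then obtain d e where de: "d \<in> E" "e \<in> E" "x = (a + d) + (b + e)"
      unfolding setplus_def coset_def by auto
    then have "d + e \<in> E" using E unfolding subgroup_of_def by blast
    moreover have "x = (a + b) + (d + e)" using de by (simp add: algebra_simps)
    ultimately show "x \<in> coset E (a + b)" unfolding coset_def by blast
  qed
next
  show "coset E (a + b) \<subseteq> setplus (coset E a) (coset E b)"
  proof
    fix x assume "x \<in> coset E (a + b)"
    then obtain d where d: "d \<in> E" "x = (a + b) + d" unfolding coset_def by auto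
    have "a + d \<in> coset E a" using d unfolding coset_def by blast
    moreover have "b + 0 \<in> coset E b" using E unfolding coset_def subgroup_of_def by blast
    moreover have "x = (a + d) + (b + 0)" using d by (simp add: algebra_simps)
    ultimately show "x \<in> setplus (coset E a) (coset E b)" unfolding setplus_def by blast
  qed
qed

lemma coset_zero: "coset E 0 = E"
  unfolding coset_def by simp

lemma setplus_coset_big:
  assumes D: "subgroup_of D" and D': "subgroup_of D'" and sub: "D \<subseteq> D'"
  shows "setplus (coset D x) D' = coset D' x"
proof -
  have "setplus (coset D x) D' \<subseteq> setplus (coset D' x) (coset D' 0)"
    using sub unfolding setplus_def coset_def by auto
  also have "\<dots> = coset D' x" using setplus_coset[OF D', of x 0] by simp
  finally have 1: "setplus (coset D x) D' \<subseteq> coset D' x" .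
  have "coset D' x \<subseteq> setplus (coset D x) D'"
  proof
    fix y assume "y \<in> coset D' x"
    then obtain d where "d \<in> D'" "y = (x + 0) + d" unfolding coset_def by auto
    moreover have "x + 0 \<in> coset D x" using D unfolding coset_def subgroup_of_def by blast
    ultimately show "y \<in> setplus (coset D x) D'" unfolding setplus_def by blast
  qed
  then show ?thesis using 1 by blast
qed

lemma eval_quot:
  assumes E: "subgroup_of E"
  shows "evalt (quot_struc H E) (coset E \<circ> r) t = coset E (ev r t)"
  by (induct t) (simp_all add: coset_zero setplus_coset[OF E])

lemma sless_coset:
  assumes H: "subgroup_of H" and c: "0 < c" and a: "a \<in> H" and b: "b \<in> H"
  shows "sless (quot_struc H (arch H c)) (coset (arch H c) a) (coset (arch H c) b)
     \<longleftrightarrow> a - b \<notin> arch H c \<and> a < b"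
proof -
  let ?E = "arch H c"
  have E: "subgroup_of ?E" by (rule arch_subgroup[OF H c])
  have z: "0 \<in> ?E" using E by (simp add: subgroup_of_def)
  show ?thesis
  proof
    assume "sless (quot_struc H ?E) (coset ?E a) (coset ?E b)"
    then have ne: "a - b \<notin> ?E" and ex: "\<exists>x\<in>coset ?E a. \<exists>y\<in>coset ?E b. x < y"
      using coset_eq[OF E] by auto
    then obtain d e where de: "d \<in> ?E" "e \<in> ?E" "a + d < b + e" unfolding coset_def by auto
    have "a < b"
    proof (rule ccontr)
      assume "\<not> a < b"
      then have 0: "0 \<le> a - b" by simp
      have ed: "e - d \<in> ?E" using de E unfolding subgroup_of_def by (metis diff_conv_add_uminus)
      have "a - b < e - d" using de(3) by (simp add: algebra_simps)
      then have "ab (a - b) \<le> ab (e - d)" using 0 ab_ge[of "e - d"] by simp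
      then have "a - b \<in> ?E" using arch_convex[OF ed diff_in[OF H a b]] by simp
      then show False using ne by simp
    qed
    then show "a - b \<notin> ?E \<and> a < b" using ne by simp
  next
    assume "a - b \<notin> ?E \<and> a < b"
    moreover have "a \<in> coset ?E a" "b \<in> coset ?E b" using z unfolding coset_def by force+
    ultimately show "sless (quot_struc H ?E) (coset ?E a) (coset ?E b)"
      using coset_eq[OF E] by auto
  qed
qed

lemma sat_quot_Eq:
  assumes H: "subgroup_of H" and c: "0 < c"
  shows "sat (quot_struc H (arch H c)) (coset (arch H c) \<circ> r) (Eq s t) \<longleftrightarrow> ev r s - ev r t \<in> arch H c"
  using arch_subgroup[OF H c] by (simp add: eval_quot coset_eq)

lemma sat_quot_Lt:
  assumes H: "subgroup_of H" and c: "0 < c" and r: "\<forall>k. r k \<in> H"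
  shows "sat (quot_struc H (arch H c)) (coset (arch H c) \<circ> r) (Lt s t) \<longleftrightarrow>
     ev r s - ev r t \<notin> arch H c \<and> ev r s < ev r t"
proof -
  have "sat (quot_struc H (arch H c)) (coset (arch H c) \<circ> r) (Lt s t) =
     sless (quot_struc H (arch H c)) (coset (arch H c) (ev r s)) (coset (arch H c) (ev r t))"
    using eval_quot[OF arch_subgroup[OF H c]] by (simp del: quot_simps)
  also have "\<dots> \<longleftrightarrow> ev r s - ev r t \<notin> arch H c \<and> ev r s < ev r t"
    by (rule sless_coset[OF H c ev_in[OF H r] ev_in[OF H r]])
  finally show ?thesis .
qed



lemma dec_disj:
  fixes A B :: "nat \<Rightarrow> bool"
  assumes A: "\<And>N N'. N \<le> N' \<Longrightarrow> A N' \<Longrightarrow> A N" and B: "\<And>N N'. N \<le> N' \<Longrightarrow> B N' \<Longrightarrow> B N"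
    and AB: "\<forall>N. A N \<or> B N"
  shows "(\<forall>N. A N) \<or> (\<forall>N. B N)"
proof (rule ccontr)
  assume "\<not> ?thesis"
  then obtain N1 N2 where n: "\<not> A N1" "\<not> B N2" by blast
  have "A (max N1 N2) \<or> B (max N1 N2)" using AB by blast
  moreover have "N1 \<le> max N1 N2" "N2 \<le> max N1 N2" by auto
  ultimately show False using A[of N1 "max N1 N2"] B[of N2 "max N1 N2"] n by blast
qed

lemma notin_arch:
  assumes "d \<in> H" "d \<notin> arch H c"
  shows "\<exists>n0. \<forall>M\<ge>n0. \<not> nmul M (ab d) < c"
proof -
  obtain n where n: "\<not> nmul n (ab d) < c" using assms by (auto simp: arch_def)
  have "\<not> nmul M (ab d) < c" if "n \<le> M" for M
    using nmul_mono_n[OF ab_nonneg that, of d] n by (meson le_less_trans)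
  then show ?thesis by blast
qed

lemma trB:
  assumes H: "subgroup_of H" and c: "0 < c" and r: "\<forall>k. r k \<in> H" and rc: "r cv = c"
  shows "qfree f \<Longrightarrow> (\<forall>N. sat (sub_struc H) r (tr cv N M p f)) \<Longrightarrow>
         sat (quot_struc H (arch H c)) (coset (arch H c) \<circ> r) f = p"
proof (induct f arbitrary: p)
  case (Eq s t)
  have dH: "ev r s - ev r t \<in> H" using diff_in[OF H ev_in[OF H r] ev_in[OF H r]] .
  have q: "sat (quot_struc H (arch H c)) (coset (arch H c) \<circ> r) (Eq s t) \<longleftrightarrow>
      (\<forall>n. nmul n (ab (ev r s - ev r t)) < c)"
    using sat_quot_Eq[OF H c, of r s t] dH unfolding arch_def by blast
  show ?case
  proof (cases p)
    case True
    then have "\<forall>N. nmul N (ab (ev r s - ev r t)) < c" using Eq.prems by (simp add: sat_cnd rc)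
    then show ?thesis using q True by blast
  next
    case False
    then have "\<not> nmul M (ab (ev r s - ev r t)) < c" using Eq.prems by (simp add: sat_cnd rc)
    then show ?thesis using q False by blast
  qed
next
  case (Lt s t)
  have dH: "ev r s - ev r t \<in> H" using diff_in[OF H ev_in[OF H r] ev_in[OF H r]] .
  have qL: "sat (quot_struc H (arch H c)) (coset (arch H c) \<circ> r) (Lt s t) \<longleftrightarrow>
      \<not> (\<forall>n. nmul n (ab (ev r s - ev r t)) < c) \<and> ev r s < ev r t"
    using sat_quot_Lt[OF H c r, of s t] dH unfolding arch_def by blast
  show ?case
  proof (cases p)
    case True
    then have "\<not> nmul M (ab (ev r s - ev r t)) < c \<and> ev r s < ev r t"
      using Lt.prems by (simp add: sat_cnd rc)
    then show ?thesis using qL True by blast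
  next
    case False
    then have "\<forall>N. nmul N (ab (ev r s - ev r t)) < c \<or> \<not> ev r s < ev r t"
      using Lt.prems by (simp add: sat_cnd rc)
    then show ?thesis using qL False by blast
  qed
next
  case (Neg f)
  then show ?case by auto
next
  case (Conj f g)
  show ?case
  proof (cases p)
    case True
    then show ?thesis using Conj.prems Conj.hyps[of True] by auto
  next
    case False
    have "(\<forall>N. sat (sub_struc H) r (tr cv N M False f)) \<or> (\<forall>N. sat (sub_struc H) r (tr cv N M False g))"
      by (rule dec_disj) (use Conj.prems False in \<open>auto intro: tr_mono\<close>)
    then show ?thesis using Conj.prems Conj.hyps[of False] False by auto
  qed
next
  case (Disj f g)
  show ?case
  proof (cases p)
    case False
    then show ?thesis using Disj.prems Disj.hyps[of False] by auto
  next
    case True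
    have "(\<forall>N. sat (sub_struc H) r (tr cv N M True f)) \<or> (\<forall>N. sat (sub_struc H) r (tr cv N M True g))"
      by (rule dec_disj) (use Disj.prems True in \<open>auto intro: tr_mono\<close>)
    then show ?thesis using Disj.prems Disj.hyps[of True] True by auto
  qed
next
  case (Ex n f)
  then show ?case by simp
qed

lemma trA:
  assumes H: "subgroup_of H" and c: "0 < c" and r: "\<forall>k. r k \<in> H" and rc: "r cv = c"
  shows "qfree f \<Longrightarrow> sat (quot_struc H (arch H c)) (coset (arch H c) \<circ> r) f = p \<Longrightarrow>
         \<exists>M0. \<forall>M\<ge>M0. \<forall>N. sat (sub_struc H) r (tr cv N M p f)"
proof (induct f arbitrary: p)
  case (Eq s t)
  have dH: "ev r s - ev r t \<in> H" using diff_in[OF H ev_in[OF H r] ev_in[OF H r]] .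
  have q: "sat (quot_struc H (arch H c)) (coset (arch H c) \<circ> r) (Eq s t) \<longleftrightarrow>
      (\<forall>n. nmul n (ab (ev r s - ev r t)) < c)"
    using sat_quot_Eq[OF H c, of r s t] dH unfolding arch_def by blast
  show ?case
  proof (cases p)
    case True
    then have "\<forall>N. nmul N (ab (ev r s - ev r t)) < c" using Eq.prems q by blast
    then show ?thesis using True by (simp add: sat_cnd rc)
  next
    case False
    then have "ev r s - ev r t \<notin> arch H c" using Eq.prems sat_quot_Eq[OF H c, of r s t] by blast
    from notin_arch[OF dH this] obtain n0 where "\<forall>M\<ge>n0. \<not> nmul M (ab (ev r s - ev r t)) < c" by blast
    then show ?thesis using False by (auto simp: sat_cnd rc)
  qed
next
  case (Lt s t)
  have dH: "ev r s - ev r t \<in> H" using diff_in[OF H ev_in[OF H r] ev_in[OF H r]] .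
  have qL: "sat (quot_struc H (arch H c)) (coset (arch H c) \<circ> r) (Lt s t) \<longleftrightarrow>
      \<not> (\<forall>n. nmul n (ab (ev r s - ev r t)) < c) \<and> ev r s < ev r t"
    using sat_quot_Lt[OF H c r, of s t] dH unfolding arch_def by blast
  show ?case
  proof (cases p)
    case True
    then have 1: "ev r s - ev r t \<notin> arch H c" and 2: "ev r s < ev r t"
      using Lt.prems sat_quot_Lt[OF H c r, of s t] by blast+
    from notin_arch[OF dH 1] obtain n0 where "\<forall>M\<ge>n0. \<not> nmul M (ab (ev r s - ev r t)) < c" by blast
    then show ?thesis using True 2 by (auto simp: sat_cnd rc)
  next
    case False
    then have "(\<forall>n. nmul n (ab (ev r s - ev r t)) < c) \<or> \<not> ev r s < ev r t"
      using Lt.prems qL by blast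
    then show ?thesis using False by (auto simp: sat_cnd rc)
  qed
next
  case (Neg f)
  have q: "qfree f" using Neg.prems(1) by simp
  from Neg.prems(2) have "(\<not> sat (quot_struc H (arch H c)) (coset (arch H c) \<circ> r) f) = p"
    by (simp only: sat.simps(3))
  then have s: "sat (quot_struc H (arch H c)) (coset (arch H c) \<circ> r) f = (\<not> p)" by blast
  obtain M0 where "\<forall>M\<ge>M0. \<forall>N. sat (sub_struc H) r (tr cv N M (\<not> p) f)"
    using Neg.hyps[OF q s] by blast
  then show ?case unfolding tr.simps(3) by blast
next
  case (Conj f g)
  let ?V = "coset (arch H c) \<circ> r" and ?Q = "quot_struc H (arch H c)"
  have qf: "qfree f" "qfree g" using Conj.prems(1) by simp_all
  have sc: "sat ?Q ?V (Conj f g) = (sat ?Q ?V f \<and> sat ?Q ?V g)" by (simp only: sat.simps)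
  show ?case
  proof (cases p)
    case True
    then have "sat ?Q ?V f = True" "sat ?Q ?V g = True" using Conj.prems(2) sc by blast+
    from Conj.hyps(1)[OF qf(1) this(1)] Conj.hyps(2)[OF qf(2) this(2)]
    obtain M1 M2 where m1: "\<forall>M\<ge>M1. \<forall>N. sat (sub_struc H) r (tr cv N M True f)"
      and m2: "\<forall>M\<ge>M2. \<forall>N. sat (sub_struc H) r (tr cv N M True g)" by blast
    have "\<forall>M\<ge>max M1 M2. \<forall>N. sat (sub_struc H) r (tr cv N M p (Conj f g))" using m1 m2 True by auto
    then show ?thesis by blast
  next
    case False
    then have "sat ?Q ?V f = False \<or> sat ?Q ?V g = False" using Conj.prems(2) sc by blast
    then show ?thesis
    proof
      assume "sat ?Q ?V f = False"
      from Conj.hyps(1)[OF qf(1) this] obtain M1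
        where m1: "\<forall>M\<ge>M1. \<forall>N. sat (sub_struc H) r (tr cv N M False f)" by blast
      have "\<forall>M\<ge>M1. \<forall>N. sat (sub_struc H) r (tr cv N M p (Conj f g))" using m1 False by auto
      then show ?thesis by blast
    next
      assume "sat ?Q ?V g = False"
      from Conj.hyps(2)[OF qf(2) this] obtain M1
        where m1: "\<forall>M\<ge>M1. \<forall>N. sat (sub_struc H) r (tr cv N M False g)" by blast
      have "\<forall>M\<ge>M1. \<forall>N. sat (sub_struc H) r (tr cv N M p (Conj f g))" using m1 False by auto
      then show ?thesis by blast
    qed
  qed
next
  case (Disj f g)
  let ?V = "coset (arch H c) \<circ> r" and ?Q = "quot_struc H (arch H c)"
  have qf: "qfree f" "qfree g" using Disj.prems(1) by simp_all
  have sc: "sat ?Q ?V (Disj f g) = (sat ?Q ?V f \<or> sat ?Q ?V g)" by (simp only: sat.simps)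
  show ?case
  proof (cases p)
    case False
    then have "sat ?Q ?V f = False" "sat ?Q ?V g = False" using Disj.prems(2) sc by blast+
    from Disj.hyps(1)[OF qf(1) this(1)] Disj.hyps(2)[OF qf(2) this(2)]
    obtain M1 M2 where m1: "\<forall>M\<ge>M1. \<forall>N. sat (sub_struc H) r (tr cv N M False f)"
      and m2: "\<forall>M\<ge>M2. \<forall>N. sat (sub_struc H) r (tr cv N M False g)" by blast
    have "\<forall>M\<ge>max M1 M2. \<forall>N. sat (sub_struc H) r (tr cv N M p (Disj f g))" using m1 m2 False by auto
    then show ?thesis by blast
  next
    case True
    then have "sat ?Q ?V f = True \<or> sat ?Q ?V g = True" using Disj.prems(2) sc by blast
    then show ?thesis
    proof
      assume "sat ?Q ?V f = True"
      from Disj.hyps(1)[OF qf(1) this] obtain M1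
        where m1: "\<forall>M\<ge>M1. \<forall>N. sat (sub_struc H) r (tr cv N M True f)" by blast
      have "\<forall>M\<ge>M1. \<forall>N. sat (sub_struc H) r (tr cv N M p (Disj f g))" using m1 True by auto
      then show ?thesis by blast
    next
      assume "sat ?Q ?V g = True"
      from Disj.hyps(2)[OF qf(2) this] obtain M1
        where m1: "\<forall>M\<ge>M1. \<forall>N. sat (sub_struc H) r (tr cv N M True g)" by blast
      have "\<forall>M\<ge>M1. \<forall>N. sat (sub_struc H) r (tr cv N M p (Disj f g))" using m1 True by auto
      then show ?thesis by blast
    qed
  qed
next
  case (Ex n f)
  then show ?case by simp
qed



lemma approx_nonEx: "(\<forall>n g. f \<noteq> Ex n g) \<Longrightarrow> approx cv N M f = tr cv N M True f"
  by (cases f) simp_all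

lemma existential_nonEx: "(\<forall>n g. f \<noteq> Ex n g) \<Longrightarrow> existential f = qfree f"
  by (cases f) simp_all

lemma approxA_base:
  assumes H: "subgroup_of H" and c: "0 < c" and ne: "\<forall>n g. f \<noteq> Ex n g"
    and e: "existential f" and r: "\<forall>k. r k \<in> H" and rc: "r cv = c"
    and s: "sat (quot_struc H (arch H c)) (coset (arch H c) \<circ> r) f"
  shows "\<exists>M0. \<forall>M\<ge>M0. \<forall>N. sat (sub_struc H) r (approx cv N M f)"
proof -
  have q: "qfree f" using e existential_nonEx[OF ne] by simp
  obtain M0 where "\<forall>M\<ge>M0. \<forall>N. sat (sub_struc H) r (tr cv N M True f)"
    using trA[OF H c r rc q eqTrueI[OF s]] by blast
  then show ?thesis using approx_nonEx[OF ne] by metis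
qed

lemma approxB_base:
  assumes H: "subgroup_of H" and c: "0 < c" and ne: "\<forall>n g. f \<noteq> Ex n g"
    and e: "existential f" and r: "\<forall>k. r k \<in> H" and rc: "r cv = c"
    and s: "\<forall>N. sat (sub_struc H) r (approx cv N M f)"
  shows "sat (quot_struc H (arch H c)) (coset (arch H c) \<circ> r) f"
proof -
  have q: "qfree f" using e existential_nonEx[OF ne] by simp
  have "\<forall>N. sat (sub_struc H) r (tr cv N M True f)" using s approx_nonEx[OF ne] by metis
  from trB[OF H c r rc q this] show ?thesis by simp
qed

lemma upd_comp: "(coset E \<circ> r)(n := coset E y) = coset E \<circ> (r(n := y))"
  by (rule ext) simp

lemma approxA:
  assumes H: "subgroup_of H" and c: "0 < c"
  shows "existential f \<Longrightarrow> maxv f < cv \<Longrightarrow> \<forall>k. r k \<in> H \<Longrightarrow> r cv = c \<Longrightarrow>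
    sat (quot_struc H (arch H c)) (coset (arch H c) \<circ> r) f \<Longrightarrow>
    \<exists>M0. \<forall>M\<ge>M0. \<forall>N. sat (sub_struc H) r (approx cv N M f)"
proof (induct f arbitrary: r)
  case (Eq s t) show ?case by (rule approxA_base[OF H c _ Eq.prems(1) Eq.prems(3-5)]) simp
next
  case (Lt s t) show ?case by (rule approxA_base[OF H c _ Lt.prems(1) Lt.prems(3-5)]) simp
next
  case (Neg f) show ?case by (rule approxA_base[OF H c _ Neg.prems(1) Neg.prems(3-5)]) simp
next
  case (Conj f g) show ?case by (rule approxA_base[OF H c _ Conj.prems(1) Conj.prems(3-5)]) simp
next
  case (Disj f g) show ?case by (rule approxA_base[OF H c _ Disj.prems(1) Disj.prems(3-5)]) simp
next
  case (Ex n g)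
  from Ex.prems(5) obtain X where X: "X \<in> coset (arch H c) ` H"
    and sX: "sat (quot_struc H (arch H c)) ((coset (arch H c) \<circ> r)(n := X)) g"
    unfolding sat.simps(6) quot_simps(1) by blast
  from X obtain y where y: "y \<in> H" "X = coset (arch H c) y" by blast
  have sy: "sat (quot_struc H (arch H c)) (coset (arch H c) \<circ> (r(n := y))) g"
    using sX unfolding y(2) upd_comp .
  have ncv: "n \<noteq> cv" using Ex.prems(2) by simp
  have ry: "\<forall>k. (r(n := y)) k \<in> H" using Ex.prems(3) y(1) by simp
  have ryc: "(r(n := y)) cv = c" using Ex.prems(4) ncv by simp
  have eg: "existential g" using Ex.prems(1) by simp
  have mg: "maxv g < cv" using Ex.prems(2) by simp
  obtain M0 where M0: "\<forall>M\<ge>M0. \<forall>N. sat (sub_struc H) (r(n := y)) (approx cv N M g)"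
    using Ex.hyps[OF eg mg ry ryc sy] by blast
  have "\<forall>M\<ge>M0. \<forall>N. sat (sub_struc H) r (approx cv N M (Ex n g))"
    using M0 y(1) by auto
  then show ?case by blast
qed

lemma approxB:
  assumes H: "subgroup_of H" and c: "0 < c" and satu: "aleph1_saturated (sub_struc H)"
  shows "existential f \<Longrightarrow> maxv f < cv \<Longrightarrow> \<forall>k. r k \<in> H \<Longrightarrow> r cv = c \<Longrightarrow>
    \<forall>N. sat (sub_struc H) r (approx cv N M f) \<Longrightarrow>
    sat (quot_struc H (arch H c)) (coset (arch H c) \<circ> r) f"
proof (induct f arbitrary: r)
  case (Eq s t) show ?case by (rule approxB_base[OF H c _ Eq.prems(1) Eq.prems(3-5)]) simp
next
  case (Lt s t) show ?case by (rule approxB_base[OF H c _ Lt.prems(1) Lt.prems(3-5)]) simp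
next
  case (Neg f) show ?case by (rule approxB_base[OF H c _ Neg.prems(1) Neg.prems(3-5)]) simp
next
  case (Conj f g) show ?case by (rule approxB_base[OF H c _ Conj.prems(1) Conj.prems(3-5)]) simp
next
  case (Disj f g) show ?case by (rule approxB_base[OF H c _ Disj.prems(1) Disj.prems(3-5)]) simp
next
  case (Ex n g)
  define S where "S N = {a \<in> sdom (sub_struc H). sat (sub_struc H) (r(n := a)) (approx cv N M g)}" for N
  have "\<forall>N. definable (sub_struc H) (S N) \<and> S N \<noteq> {}"
  proof
    fix N
    have "definable (sub_struc H) (S N)" unfolding S_def
      by (rule definable_upd) (use Ex.prems(3) in simp)
    moreover have "S N \<noteq> {}" using Ex.prems(5) unfolding S_def by auto
    ultimately show "definable (sub_struc H) (S N) \<and> S N \<noteq> {}" by blast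
  qed
  moreover have "\<forall>N. S (Suc N) \<subseteq> S N"
  proof (intro allI subsetI)
    fix N a assume "a \<in> S (Suc N)"
    then show "a \<in> S N" unfolding S_def using approx_mono[of N "Suc N"] by auto
  qed
  ultimately have "(\<Inter>N. S N) \<noteq> {}" using satu unfolding aleph1_saturated_def by blast
  then obtain y where y: "y \<in> H" and sy: "\<forall>N. sat (sub_struc H) (r(n := y)) (approx cv N M g)"
    unfolding S_def by auto
  have ncv: "n \<noteq> cv" using Ex.prems(2) by simp
  have ry: "\<forall>k. (r(n := y)) k \<in> H" using Ex.prems(3) y by simp
  have ryc: "(r(n := y)) cv = c" using Ex.prems(4) ncv by simp
  have eg: "existential g" using Ex.prems(1) by simp
  have mg: "maxv g < cv" using Ex.prems(2) by simp
  have "sat (quot_struc H (arch H c)) (coset (arch H c) \<circ> (r(n := y))) g"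
    by (rule Ex.hyps[OF eg mg ry ryc sy])
  then have "sat (quot_struc H (arch H c)) ((coset (arch H c) \<circ> r)(n := coset (arch H c) y)) g"
    unfolding upd_comp .
  moreover have "coset (arch H c) y \<in> sdom (quot_struc H (arch H c))" using y by simp
  ultimately show ?case unfolding sat.simps(6) by blast
qed

lemma qf_transfer:
  assumes G: "subgroup_of G" and c: "0 < c" and r: "\<forall>k. r k \<in> G"
  shows "qfree f \<Longrightarrow> sat (quot_struc UNIV (arch UNIV c)) (coset (arch UNIV c) \<circ> r) f =
     sat (quot_struc G (arch G c)) (coset (arch G c) \<circ> r) f"
proof (induct f)
  case (Eq s t)
  have dG: "ev r s - ev r t \<in> G" using diff_in[OF G ev_in[OF G r] ev_in[OF G r]] .
  have "ev r s - ev r t \<in> arch UNIV c \<longleftrightarrow> ev r s - ev r t \<in> arch G c"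
    using dG by (simp add: arch_def)
  then show ?case using sat_quot_Eq[OF G c, of r s t] sat_quot_Eq[OF subgroup_UNIV c, of r s t] by blast
next
  case (Lt s t)
  have dG: "ev r s - ev r t \<in> G" using diff_in[OF G ev_in[OF G r] ev_in[OF G r]] .
  have "ev r s - ev r t \<in> arch UNIV c \<longleftrightarrow> ev r s - ev r t \<in> arch G c"
    using dG by (simp add: arch_def)
  moreover have "\<forall>k. r k \<in> (UNIV :: 'a set)" by simp
  ultimately show ?case using sat_quot_Lt[OF G c r, of s t] sat_quot_Lt[OF subgroup_UNIV c, of r s t] by blast
next
  case (Neg f) then show ?case by (simp only: sat.simps qfree.simps)
next
  case (Conj f g) then show ?case by (simp only: sat.simps qfree.simps)
next
  case (Disj f g) then show ?case by (simp only: sat.simps qfree.simps)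
qed simp



theorem lemma2p11:
  fixes G :: "'a::linordered_ab_group_add set" and \<gamma> :: 'a
  assumes "subgroup_of G"
    and "ex_closed_emb (sub_struc G) (sub_struc (UNIV :: 'a set)) id"
    and "\<gamma> \<in> G"
  shows "(\<forall>Dp Dp'. min_convex_containing G \<gamma> Dp \<and> min_convex_containing UNIV \<gamma> Dp' \<longrightarrow>
            Dp = Dp' \<inter> G \<and>
            (\<forall>(x::'a) (n::nat). n > 0 \<longrightarrow>
                (\<exists>g\<in>G. coset Dp' (\<Sum>i<n. x) = coset Dp' g) \<longrightarrow>
                (\<exists>g\<in>G. coset Dp' x = coset Dp' g)))
       \<and> (aleph1_saturated (sub_struc G) \<longrightarrow>
            (\<forall>D D'. max_convex_avoiding G \<gamma> D \<and> max_convex_avoiding UNIV \<gamma> D' \<longrightarrow>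
               ex_closed_emb (quot_struc G D) (quot_struc UNIV D') (\<lambda>X. setplus X D')))"
proof -
  note G = assms(1) and gG = assms(3)
  have ecl: "\<And>f v. existential f \<Longrightarrow> (\<forall>n. v n \<in> G) \<Longrightarrow> sat (sub_struc UNIV) v f \<Longrightarrow> sat (sub_struc G) v f"
    using assms(2) unfolding ex_closed_emb_def by (metis id_comp sub_struc_simps(1))
  have part1: "\<forall>Dp Dp'. min_convex_containing G \<gamma> Dp \<and> min_convex_containing UNIV \<gamma> Dp' \<longrightarrow>
            Dp = Dp' \<inter> G \<and>
            (\<forall>(x::'a) (n::nat). n > 0 \<longrightarrow>
                (\<exists>g\<in>G. coset Dp' (\<Sum>i<n. x) = coset Dp' g) \<longrightarrow>
                (\<exists>g\<in>G. coset Dp' x = coset Dp' g))"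
  proof (intro allI impI conjI)
    fix Dp Dp' assume m: "min_convex_containing G \<gamma> Dp \<and> min_convex_containing UNIV \<gamma> Dp'"
    have Dp: "Dp = fin G (ab \<gamma>)" using min_contain_eq[OF G gG] m by blast
    have Dp': "Dp' = fin UNIV (ab \<gamma>)" using min_contain_eq[OF subgroup_UNIV, of \<gamma>] m by blast
    show "Dp = Dp' \<inter> G" unfolding Dp Dp' fin_def by auto
    have sD: "subgroup_of Dp'" using m unfolding min_convex_containing_def convex_subgroup_def by blast
    fix x :: 'a and n :: nat
    assume n: "0 < n" and "\<exists>g\<in>G. coset Dp' (\<Sum>i<n. x) = coset Dp' g"
    then obtain g where g: "g \<in> G" "coset Dp' (nmul n x) = coset Dp' g" by (auto simp: nmul_sum)
    then have "nmul n x - g \<in> Dp'" using coset_eq[OF sD] by blast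
    then obtain m where mm: "ab (nmul n x - g) \<le> nmul m (ab \<gamma>)" unfolding Dp' fin_def by blast
    define body where "body = Conj (Neg (Lt (Plus (Var 1) (ntm m (Var 2))) (ntm n (Var 0))))
                                   (Neg (Lt (Plus (ntm n (Var 0)) (ntm m (Var 2))) (Var 1)))"
    define v :: "nat \<Rightarrow> 'a" where "v k = (if k = 1 then g else if k = 2 then ab \<gamma> else 0)" for k
    have vG: "\<forall>k. v k \<in> G" using g(1) abs_in[OF G gG] G by (simp add: v_def subgroup_of_def)
    have bodysem: "sat (sub_struc H) (v(0 := a)) body \<longleftrightarrow> ab (nmul n a - g) \<le> nmul m (ab \<gamma>)" for H a
      by (simp add: body_def v_def ab_le_iff not_less diff_le_eq le_diff_eq algebra_simps)
    have "sat (sub_struc UNIV) v (Ex 0 body)" using mm bodysem by auto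
    then have "sat (sub_struc G) v (Ex 0 body)"
      by (rule ecl[rotated 2]) (simp_all add: body_def vG)
    then obtain y where y: "y \<in> G" "ab (nmul n y - g) \<le> nmul m (ab \<gamma>)" using bodysem by auto
    then have "nmul n y - g \<in> Dp'" unfolding Dp' fin_def by blast
    then have "(nmul n x - g) - (nmul n y - g) \<in> Dp'"
      using \<open>nmul n x - g \<in> Dp'\<close> sD by (metis diff_in)
    then have "nmul n (x - y) \<in> Dp'" by (simp add: nmul_diff)
    then obtain k where k: "ab (nmul n (x - y)) \<le> nmul k (ab \<gamma>)" unfolding Dp' fin_def by blast
    have "ab (x - y) \<le> nmul n (ab (x - y))" by (rule nmul_ge[OF n ab_nonneg])
    also have "\<dots> = ab (nmul n (x - y))" by (simp add: nmul_abs)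
    finally have "ab (x - y) \<le> nmul k (ab \<gamma>)" using k by (rule order_trans)
    then have "x - y \<in> Dp'" unfolding Dp' fin_def by blast
    then have "coset Dp' x = coset Dp' y" using coset_eq[OF sD] by blast
    then show "\<exists>g\<in>G. coset Dp' x = coset Dp' g" using y(1) by blast
  qed
  have part2: "aleph1_saturated (sub_struc G) \<longrightarrow>
            (\<forall>D D'. max_convex_avoiding G \<gamma> D \<and> max_convex_avoiding UNIV \<gamma> D' \<longrightarrow>
               ex_closed_emb (quot_struc G D) (quot_struc UNIV D') (\<lambda>X. setplus X D'))"
  proof (intro impI allI)
    assume satu: "aleph1_saturated (sub_struc G)"
    fix D D' assume m: "max_convex_avoiding G \<gamma> D \<and> max_convex_avoiding UNIV \<gamma> D'"
    define c where "c = ab \<gamma>"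
    have D: "D = arch G c" and g0: "\<gamma> \<noteq> 0" using max_avoid_eq[OF G gG] m unfolding c_def by blast+
    have D': "D' = arch UNIV c" using max_avoid_eq[OF subgroup_UNIV, of \<gamma>] m unfolding c_def by blast
    have c: "0 < c" unfolding c_def by (rule ab_gt0[OF g0])
    have cG: "c \<in> G" unfolding c_def by (rule abs_in[OF G gG])
    have sD: "subgroup_of D" unfolding D by (rule arch_subgroup[OF G c])
    have sD': "subgroup_of D'" unfolding D' by (rule arch_subgroup[OF subgroup_UNIV c])
    have DD': "D \<subseteq> D'" unfolding D D' arch_def by auto
    have hm: "setplus (coset D x) D' = coset D' x" for x by (rule setplus_coset_big[OF sD sD' DD'])
    have rep: "\<exists>r. (\<forall>k. r k \<in> G) \<and> v = coset D \<circ> r" if "\<forall>n. v n \<in> sdom (quot_struc G D)" for v :: "nat \<Rightarrow> 'a set"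
    proof -
      have "\<forall>k. \<exists>y. y \<in> G \<and> v k = coset D y" using that by auto
      then obtain r where "\<forall>k. r k \<in> G \<and> v k = coset D (r k)" by metis
      then show ?thesis by (intro exI[of _ r]) auto
    qed
    have hv: "(\<lambda>X. setplus X D') \<circ> (coset D \<circ> r) = coset D' \<circ> r" for r
      by (rule ext) (simp add: hm)
    show "ex_closed_emb (quot_struc G D) (quot_struc UNIV D') (\<lambda>X. setplus X D')"
      unfolding ex_closed_emb_def is_embedding_def
    proof (intro conjI allI impI)
      show "(\<lambda>X. setplus X D') ` sdom (quot_struc G D) \<subseteq> sdom (quot_struc UNIV D')"
        using hm by auto
    next
      fix f and v :: "nat \<Rightarrow> 'a set" assume qf: "qfree f" and v: "\<forall>n. v n \<in> sdom (quot_struc G D)"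
      obtain r where r: "\<forall>k. r k \<in> G" and vr: "v = coset D \<circ> r" using rep[OF v] by blast
      show "sat (quot_struc UNIV D') ((\<lambda>X. setplus X D') \<circ> v) f = sat (quot_struc G D) v f"
        unfolding vr hv unfolding D D' by (rule qf_transfer[OF G c r qf])
    next
      fix f and v :: "nat \<Rightarrow> 'a set" assume ef: "existential f" and v: "\<forall>n. v n \<in> sdom (quot_struc G D)"
        and sB: "sat (quot_struc UNIV D') ((\<lambda>X. setplus X D') \<circ> v) f"
      obtain r where r: "\<forall>k. r k \<in> G" and vr: "v = coset D \<circ> r" using rep[OF v] by blast
      define cv where "cv = Suc (maxv f)"
      define r' where "r' = r(cv := c)"
      have mcv: "maxv f < cv" unfolding cv_def by simp
      have r'G: "\<forall>k. r' k \<in> G" using r cG by (simp add: r'_def)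
      have r'c: "r' cv = c" by (simp add: r'_def)
      have agree: "\<forall>k\<le>maxv f. (coset E \<circ> r) k = (coset E \<circ> r') k" for E :: "'a set"
        using mcv by (simp add: r'_def)
      have "sat (quot_struc UNIV D') (coset D' \<circ> r) f" using sB unfolding vr hv .
      then have "sat (quot_struc UNIV (arch UNIV c)) (coset (arch UNIV c) \<circ> r') f"
        using sat_coinc[OF agree[of D']] unfolding D' by (simp add: comp_def)
      from approxA[OF subgroup_UNIV c ef mcv _ r'c this]
      obtain M0 where M0: "\<forall>M\<ge>M0. \<forall>N. sat (sub_struc UNIV) r' (approx cv N M f)" by auto
      have "\<forall>N. sat (sub_struc G) r' (approx cv N M0 f)"
      proof
        fix N
        show "sat (sub_struc G) r' (approx cv N M0 f)"
          by (rule ecl[OF existential_approx[OF ef] r'G]) (use M0 in blast)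
      qed
      from approxB[OF G c satu ef mcv r'G r'c this]
      have "sat (quot_struc G (arch G c)) (coset (arch G c) \<circ> r') f" .
      then show "sat (quot_struc G D) v f"
        using sat_coinc[OF agree[of D]] unfolding vr D by (simp add: comp_def)
    qed
  qed
  show ?thesis using part1 part2 by blast
qed


end
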